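(* Let $M^2$ be a surface in $\mathbb{R}^4$ free of flat points. Then $M^2$ has flat normal connection (the curvature of its normal connection vanishes identically) if and only if at each point of $M^2$ the tangent indicatrix $\chi$ is a rectangular hyperbola (a Lorentz circle), i.e. the principal normal curvatures satisfy $\nu''=-\nu'\neq 0$.
   Context: Let $M^2: z=z(u,v)$ be a regular surface in $\mathbb{R}^4$ with first fundamental form $I=E\,du^2+2F\,du\,dv+G\,dv^2$, $W=\sqrt{EG-F^2}$. Choose an orthonormal normal frame $\{e_1,e_2\}$ with $\{z_u,z_v,e_1,e_2\}$ positively oriented, write $\sigma(z_u,z_u)=c_{11}^1e_1+c_{11}^2e_2$, $\sigma(z_u,z_v)=c_{12}^1e_1+c_{12}^2e_2$, $\sigma(z_v,z_v)=c_{22}^1e_1+c_{22}^2e_2$ ($\sigma$ the second fundamental form), and set $L=\frac{2}{W}(c_{11}^1c_{12}^2-c_{12}^1c_{11}^2)$, $M=\frac{1}{W}(c_{11}^1c_{22}^2-c_{22}^1c_{11}^2)$, $N=\frac{2}{W}(c_{12}^1c_{22}^2-c_{22}^1c_{12}^2)$. A point is flat if $L=M=N=0$; "free of flat points" means $(L,M,N)\ne(0,0,0)$ everywhere. At each point, the principal normal curvatures $\nu',\nu''$ are the two roots of $(EG-F^2)\nu^2-(EN+GL-2FM)\nu+(LN-M^2)=0$ (the eigenvalues of $II=L\lambda^2+2M\lambda\mu+N\mu^2$ relative to $I$), with corresponding $I$-orthogonal principal directions. The tangent indicatrix $\chi$ at $p$ is the conic in $T_pM^2$ given, in Cartesian coordinates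 $(X,Y)$ with respect to an orthonormal basis of principal directions, by $\nu'X^2+\nu''Y^2=\varepsilon$, $\varepsilon=\pm1$. *)

theory Defs
  imports "HOL-Analysis.Analysis"
begin

definition pu :: "(real \<times> real \<Rightarrow> 'a::real_normed_vector) \<Rightarrow> real \<times> real \<Rightarrow> 'a" where
  "pu f p = vector_derivative (\<lambda>t. f (t, snd p)) (at (fst p))"

definition pv :: "(real \<times> real \<Rightarrow> 'a::real_normed_vector) \<Rightarrow> real \<times> real \<Rightarrow> 'a" where
  "pv f p = vector_derivative (\<lambda>t. f (fst p, t)) (at (snd p))"

fun Ck :: "nat \<Rightarrow> (real \<times> real \<Rightarrow> 'a::real_normed_vector) \<Rightarrow> (real \<times> real) set \<Rightarrow> bool" where
  "Ck 0 f U = continuous_on U f"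
| "Ck (Suc k) f U = ((\<forall>p\<in>U. f differentiable (at p)) \<and> Ck k (pu f) U \<and> Ck k (pv f) U)"

definition smooth_on :: "(real \<times> real \<Rightarrow> 'a::real_normed_vector) \<Rightarrow> (real \<times> real) set \<Rightarrow> bool" where
  "smooth_on f U \<longleftrightarrow> (\<forall>k. Ck k f U)"

definition regular_surface :: "(real \<times> real \<Rightarrow> real^4) \<Rightarrow> (real \<times> real) set \<Rightarrow> bool" where
  "regular_surface z U \<longleftrightarrow> open U \<and> smooth_on z U \<and>
     (\<forall>p\<in>U. \<forall>a b. a *\<^sub>R pu z p + b *\<^sub>R pv z p = 0 \<longrightarrow> a = 0 \<and> b = 0)"

definition EE :: "(real \<times> real \<Rightarrow> real^4) \<Rightarrow> real \<times> real \<Rightarrow> real" where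
  "EE z p = pu z p \<bullet> pu z p"
definition FF :: "(real \<times> real \<Rightarrow> real^4) \<Rightarrow> real \<times> real \<Rightarrow> real" where
  "FF z p = pu z p \<bullet> pv z p"
definition GG :: "(real \<times> real \<Rightarrow> real^4) \<Rightarrow> real \<times> real \<Rightarrow> real" where
  "GG z p = pv z p \<bullet> pv z p"
definition WW :: "(real \<times> real \<Rightarrow> real^4) \<Rightarrow> real \<times> real \<Rightarrow> real" where
  "WW z p = sqrt (EE z p * GG z p - (FF z p)\<^sup>2)"

definition normal_frame ::
  "(real \<times> real \<Rightarrow> real^4) \<Rightarrow> (real \<times> real) set \<Rightarrow> (real \<times> real \<Rightarrow> real^4) \<Rightarrow> (real \<times> real \<Rightarrow> real^4) \<Rightarrow> bool" where
  "normal_frame z U e1 e2 \<longleftrightarrow> smooth_on e1 U \<and> smooth_on e2 U \<and>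
     (\<forall>p\<in>U. e1 p \<bullet> e1 p = 1 \<and> e2 p \<bullet> e2 p = 1 \<and> e1 p \<bullet> e2 p = 0 \<and>
            e1 p \<bullet> pu z p = 0 \<and> e1 p \<bullet> pv z p = 0 \<and>
            e2 p \<bullet> pu z p = 0 \<and> e2 p \<bullet> pv z p = 0 \<and>
            det (vector [pu z p, pv z p, e1 p, e2 p] :: real^4^4) > 0)"

definition nproj :: "(real \<times> real \<Rightarrow> real^4) \<Rightarrow> (real \<times> real \<Rightarrow> real^4) \<Rightarrow> real \<times> real \<Rightarrow> real^4 \<Rightarrow> real^4" where
  "nproj e1 e2 p w = (w \<bullet> e1 p) *\<^sub>R e1 p + (w \<bullet> e2 p) *\<^sub>R e2 p"

definition sigma_uu where "sigma_uu z e1 e2 p = nproj e1 e2 p (pu (pu z) p)"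
definition sigma_uv where "sigma_uv z e1 e2 p = nproj e1 e2 p (pv (pu z) p)"
definition sigma_vv where "sigma_vv z e1 e2 p = nproj e1 e2 p (pv (pv z) p)"

definition c11_1 where "c11_1 z e1 e2 p = sigma_uu z e1 e2 p \<bullet> e1 p"
definition c11_2 where "c11_2 z e1 e2 p = sigma_uu z e1 e2 p \<bullet> e2 p"
definition c12_1 where "c12_1 z e1 e2 p = sigma_uv z e1 e2 p \<bullet> e1 p"
definition c12_2 where "c12_2 z e1 e2 p = sigma_uv z e1 e2 p \<bullet> e2 p"
definition c22_1 where "c22_1 z e1 e2 p = sigma_vv z e1 e2 p \<bullet> e1 p"
definition c22_2 where "c22_2 z e1 e2 p = sigma_vv z e1 e2 p \<bullet> e2 p"

definition LL :: "(real \<times> real \<Rightarrow> real^4) \<Rightarrow> (real \<times> real \<Rightarrow> real^4) \<Rightarrow> (real \<times> real \<Rightarrow> real^4) \<Rightarrow> real \<times> real \<Rightarrow> real" where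
  "LL z e1 e2 p = 2 / WW z p * (c11_1 z e1 e2 p * c12_2 z e1 e2 p - c12_1 z e1 e2 p * c11_2 z e1 e2 p)"
definition MM :: "(real \<times> real \<Rightarrow> real^4) \<Rightarrow> (real \<times> real \<Rightarrow> real^4) \<Rightarrow> (real \<times> real \<Rightarrow> real^4) \<Rightarrow> real \<times> real \<Rightarrow> real" where
  "MM z e1 e2 p = 1 / WW z p * (c11_1 z e1 e2 p * c22_2 z e1 e2 p - c22_1 z e1 e2 p * c11_2 z e1 e2 p)"
definition NN :: "(real \<times> real \<Rightarrow> real^4) \<Rightarrow> (real \<times> real \<Rightarrow> real^4) \<Rightarrow> (real \<times> real \<Rightarrow> real^4) \<Rightarrow> real \<times> real \<Rightarrow> real" where
  "NN z e1 e2 p = 2 / WW z p * (c12_1 z e1 e2 p * c22_2 z e1 e2 p - c22_1 z e1 e2 p * c12_2 z e1 e2 p)"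

definition flat_point where
  "flat_point z e1 e2 p \<longleftrightarrow> LL z e1 e2 p = 0 \<and> MM z e1 e2 p = 0 \<and> NN z e1 e2 p = 0"

definition principal_normal_curvatures where
  "principal_normal_curvatures z e1 e2 p nu1 nu2 \<longleftrightarrow>
     (\<forall>x::real. (EE z p * GG z p - (FF z p)\<^sup>2) * x\<^sup>2
        - (EE z p * NN z e1 e2 p + GG z p * LL z e1 e2 p - 2 * FF z p * MM z e1 e2 p) * x
        + (LL z e1 e2 p * NN z e1 e2 p - (MM z e1 e2 p)\<^sup>2)
      = (EE z p * GG z p - (FF z p)\<^sup>2) * (x - nu1) * (x - nu2))"

text \<open>Normal connection D along the coordinate fields, and its curvature
  R^perp(z_u,z_v) xi = D_u D_v xi - D_v D_u xi (coordinate fields commute).\<close>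
definition Dn_u where "Dn_u e1 e2 xi p = nproj e1 e2 p (pu xi p)"
definition Dn_v where "Dn_v e1 e2 xi p = nproj e1 e2 p (pv xi p)"

definition Rperp :: "(real \<times> real \<Rightarrow> real^4) \<Rightarrow> (real \<times> real \<Rightarrow> real^4) \<Rightarrow> (real \<times> real \<Rightarrow> real^4) \<Rightarrow> real \<times> real \<Rightarrow> real^4" where
  "Rperp e1 e2 xi p = Dn_u e1 e2 (Dn_v e1 e2 xi) p - Dn_v e1 e2 (Dn_u e1 e2 xi) p"

text \<open>Flat normal connection: the normal curvature tensor vanishes on the
  normal frame (hence, by tensoriality, on all normal fields) at every point.\<close>
definition flat_normal_connection where
  "flat_normal_connection U e1 e2 \<longleftrightarrow> (\<forall>p\<in>U. Rperp e1 e2 e1 p = 0 \<and> Rperp e1 e2 e2 p = 0)"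

end

theory Submission
  imports Defs
begin

lemma pu_has:
  fixes f :: "real \<times> real \<Rightarrow> 'a::real_normed_vector"
  assumes "f differentiable (at p)"
  shows "((\<lambda>t. f (t, snd p)) has_vector_derivative pu f p) (at (fst p))"
proof -
  have "(\<lambda>t. (t, snd p)) differentiable (at (fst p))"
    using has_derivative_Pair[OF has_derivative_ident has_derivative_const] unfolding differentiable_def by blast
  moreover have "f differentiable (at ((\<lambda>t. (t, snd p)) (fst p)))" using assms by simp
  ultimately have "(f \<circ> (\<lambda>t. (t, snd p))) differentiable (at (fst p))"
    by (rule differentiable_chain_at)
  then show ?thesis unfolding pu_def vector_derivative_works[symmetric] by (simp add: o_def)
qed

lemma pv_has:
  fixes f :: "real \<times> real \<Rightarrow> 'a::real_normed_vector"
  assumes "f differentiable (at p)"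
  shows "((\<lambda>t. f (fst p, t)) has_vector_derivative pv f p) (at (snd p))"
proof -
  have "(\<lambda>t. (fst p, t)) differentiable (at (snd p))"
    using has_derivative_Pair[OF has_derivative_const has_derivative_ident] unfolding differentiable_def by blast
  moreover have "f differentiable (at ((\<lambda>t. (fst p, t)) (snd p)))" using assms by simp
  ultimately have "(f \<circ> (\<lambda>t. (fst p, t))) differentiable (at (snd p))"
    by (rule differentiable_chain_at)
  then show ?thesis unfolding pv_def vector_derivative_works[symmetric] by (simp add: o_def)
qed

lemma inner_has:
  fixes f g :: "real \<Rightarrow> 'a::real_inner"
  assumes "(f has_vector_derivative f') (at x)" "(g has_vector_derivative g') (at x)"
  shows "((\<lambda>t. f t \<bullet> g t) has_real_derivative (f' \<bullet> g x + f x \<bullet> g')) (at x)"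
  using bounded_bilinear.has_vector_derivative[OF bounded_bilinear_inner assms]
  unfolding has_real_derivative_iff_has_vector_derivative by (simp add: add.commute)

lemma inner_has_v:
  fixes f g :: "real \<Rightarrow> 'a::real_inner"
  assumes "(f has_vector_derivative f') (at x)" "(g has_vector_derivative g') (at x)"
  shows "((\<lambda>t. f t \<bullet> g t) has_vector_derivative (f' \<bullet> g x + f x \<bullet> g')) (at x)"
  using inner_has[OF assms] unfolding has_real_derivative_iff_has_vector_derivative .

lemma const_deriv_zero:
  fixes h :: "real \<times> real \<Rightarrow> real"
  assumes "open U" "p \<in> U" "\<forall>q\<in>U. h q = c"
    and "((\<lambda>t. h (t, snd p)) has_vector_derivative D) (at (fst p))"
  shows "D = 0"
proof -
  have o: "open {t. (t, snd p) \<in> U}"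
    using continuous_open_vimage[OF assms(1), of "\<lambda>t. (t, snd p)"] by (auto intro!: continuous_intros simp: vimage_def)
  have "((\<lambda>t. c) has_vector_derivative 0) (at (fst p))" by (rule has_vector_derivative_const)
  then have "((\<lambda>t. h (t, snd p)) has_vector_derivative 0) (at (fst p))"
    by (rule has_vector_derivative_transform_within_open[OF _ o]) (use assms in auto)
  then show ?thesis using assms(4) vector_derivative_unique_at by blast
qed

lemma const_deriv_zero_v:
  fixes h :: "real \<times> real \<Rightarrow> real"
  assumes "open U" "p \<in> U" "\<forall>q\<in>U. h q = c"
    and "((\<lambda>t. h (fst p, t)) has_vector_derivative D) (at (snd p))"
  shows "D = 0"
proof -
  have o: "open {t. (fst p, t) \<in> U}"
    using continuous_open_vimage[OF assms(1), of "\<lambda>t. (fst p, t)"] by (auto intro!: continuous_intros simp: vimage_def)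
  have "((\<lambda>t. c) has_vector_derivative 0) (at (snd p))" by (rule has_vector_derivative_const)
  then have "((\<lambda>t. h (fst p, t)) has_vector_derivative 0) (at (snd p))"
    by (rule has_vector_derivative_transform_within_open[OF _ o]) (use assms in auto)
  then show ?thesis using assms(4) vector_derivative_unique_at by blast
qed

lemma inner_const_u:
  fixes f g :: "real \<times> real \<Rightarrow> 'a::real_inner"
  assumes "open U" "p \<in> U" "\<forall>q\<in>U. f q \<bullet> g q = c" "f differentiable (at p)" "g differentiable (at p)"
  shows "pu f p \<bullet> g p + f p \<bullet> pu g p = 0"
  using const_deriv_zero[OF assms(1,2), of "\<lambda>q. f q \<bullet> g q" c] assms(3)
    inner_has_v[OF pu_has[OF assms(4)] pu_has[OF assms(5)]] by auto

lemma inner_const_v: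
  fixes f g :: "real \<times> real \<Rightarrow> 'a::real_inner"
  assumes "open U" "p \<in> U" "\<forall>q\<in>U. f q \<bullet> g q = c" "f differentiable (at p)" "g differentiable (at p)"
  shows "pv f p \<bullet> g p + f p \<bullet> pv g p = 0"
  using const_deriv_zero_v[OF assms(1,2), of "\<lambda>q. f q \<bullet> g q" c] assms(3)
    inner_has_v[OF pv_has[OF assms(4)] pv_has[OF assms(5)]] by auto


lemma box_in_ball:
  fixes a b x y t r :: real
  assumes "a \<le> x" "x \<le> a + t" "b \<le> y" "y \<le> b + t" "2 * t < r"
  shows "dist (x, y) (a, b) < r"
proof -
  have "dist (x,y) (a,b) = sqrt ((x-a)\<^sup>2 + (y-b)\<^sup>2)" by (simp add: dist_Pair_Pair dist_real_def)
  also have "\<dots> \<le> \<bar>x-a\<bar> + \<bar>y-b\<bar>" by (rule sqrt_sum_squares_le_sum_abs)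
  also have "\<dots> < r" using assms by auto
  finally show ?thesis .
qed

lemma half_contra: fixes x y z :: real assumes "x \<le> y + z" "y < x/2" "z < x / 2" shows False
  using assms by linarith

lemma clairaut_real:
  fixes g gu gv guv gvu :: "real \<times> real \<Rightarrow> real"
  assumes U: "open U" "p \<in> U"
    and du: "\<And>q. q\<in>U \<Longrightarrow> ((\<lambda>t. g (t, snd q)) has_real_derivative gu q) (at (fst q))"
    and dv: "\<And>q. q\<in>U \<Longrightarrow> ((\<lambda>s. g (fst q, s)) has_real_derivative gv q) (at (snd q))"
    and duv: "\<And>q. q\<in>U \<Longrightarrow> ((\<lambda>s. gu (fst q, s)) has_real_derivative guv q) (at (snd q))"
    and dvu: "\<And>q. q\<in>U \<Longrightarrow> ((\<lambda>t. gv (t, snd q)) has_real_derivative gvu q) (at (fst q))"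
    and c1: "isCont guv p" and c2: "isCont gvu p"
  shows "guv p = gvu p"
proof -
  obtain a b where p: "p = (a, b)" by (cases p)
  obtain r where r: "r > 0" "ball p r \<subseteq> U" using U open_contains_ball by blast
  have inU: "(x, y) \<in> U" if "a \<le> x" "x \<le> a + t" "b \<le> y" "y \<le> b + t" "2 * t < r" for x y t
    using box_in_ball[OF that] r p by (auto simp: dist_commute)
  have key: "\<exists>q1 q2. dist q1 p < 4 * t \<and> dist q2 p < 4 * t \<and> guv q1 = gvu q2"
    if t: "0 < t" "2 * t < r" for t
  proof -
    have inU': "(x, y) \<in> U" if "a \<le> x" "x \<le> a + t" "b \<le> y" "y \<le> b + t" for x y
      using inU[of x t y] that t by auto
    define D where "D = g (a+t, b+t) - g (a+t, b) - g (a, b+t) + g (a, b)"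
    have "\<exists>z. a < z \<and> z < a + t \<and>
        (g (a+t, b+t) - g (a+t, b)) - (g (a, b+t) - g (a, b)) = ((a+t) - a) * (gu (z, b+t) - gu (z, b))"
      apply (rule MVT2[where f = "\<lambda>x. g (x, b+t) - g (x, b)"])
      using t apply simp
      apply (rule DERIV_diff)
      using t by (auto intro!: du[of "(_, b+t)", simplified] du[of "(_, b)", simplified] inU')
    then obtain x1 where x1: "a < x1" "x1 < a + t" "D = t * (gu (x1, b+t) - gu (x1, b))"
      unfolding D_def by (auto simp: algebra_simps)
    have "\<exists>z. b < z \<and> z < b + t \<and> gu (x1, b+t) - gu (x1, b) = ((b+t) - b) * guv (x1, z)"
      apply (rule MVT2[where f = "\<lambda>y. gu (x1, y)"])
      using t apply simp
      using t x1 by (intro duv[of "(x1, _)", simplified] inU') auto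
    then obtain y1 where y1: "b < y1" "y1 < b + t" "gu (x1, b+t) - gu (x1, b) = t * guv (x1, y1)"
      by auto
    have "\<exists>z. b < z \<and> z < b + t \<and>
        (g (a+t, b+t) - g (a, b+t)) - (g (a+t, b) - g (a, b)) = ((b+t) - b) * (gv (a+t, z) - gv (a, z))"
      apply (rule MVT2[where f = "\<lambda>y. g (a+t, y) - g (a, y)"])
      using t apply simp
      apply (rule DERIV_diff)
      using t by (auto intro!: dv[of "(a+t, _)", simplified] dv[of "(a, _)", simplified] inU')
    then obtain y2 where y2: "b < y2" "y2 < b + t" "D = t * (gv (a+t, y2) - gv (a, y2))"
      unfolding D_def by (auto simp: algebra_simps)
    have "\<exists>z. a < z \<and> z < a + t \<and> gv (a+t, y2) - gv (a, y2) = ((a+t) - a) * gvu (z, y2)"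
      apply (rule MVT2[where f = "\<lambda>x. gv (x, y2)"])
      using t apply simp
      using t y2 by (intro dvu[of "(_, y2)", simplified] inU') auto
    then obtain x2 where x2: "a < x2" "x2 < a + t" "gv (a+t, y2) - gv (a, y2) = t * gvu (x2, y2)"
      by auto
    have "t * t * guv (x1, y1) = t * t * gvu (x2, y2)"
      using x1(3) y1(3) y2(3) x2(3) by (metis mult.assoc)
    then have eq: "guv (x1, y1) = gvu (x2, y2)" using t by simp
    have "dist (x1, y1) p < 4 * t" "dist (x2, y2) p < 4 * t"
      using box_in_ball[of a x1 t b y1 "4*t"] box_in_ball[of a x2 t b y2 "4*t"] x1 y1 x2 y2 t p
      by auto
    then show ?thesis using eq by blast
  qed
  show ?thesis
  proof (rule ccontr)
    assume ne: "guv p \<noteq> gvu p"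
    define e where "e = \<bar>guv p - gvu p\<bar> / 2"
    have e: "e > 0" using ne by (simp add: e_def)
    obtain d1 where d1: "d1 > 0" "\<And>x. dist x p < d1 \<Longrightarrow> dist (guv x) (guv p) < e"
      using c1 e unfolding continuous_at_eps_delta by blast
    obtain d2 where d2: "d2 > 0" "\<And>x. dist x p < d2 \<Longrightarrow> dist (gvu x) (gvu p) < e"
      using c2 e unfolding continuous_at_eps_delta by blast
    define t where "t = min r (min d1 d2) / 4"
    have t: "0 < t" "2 * t < r" "4 * t \<le> d1" "4 * t \<le> d2" using r d1 d2 by (auto simp: t_def)
    obtain q1 q2 where q: "dist q1 p < 4 * t" "dist q2 p < 4 * t" "guv q1 = gvu q2"
      using key[OF t(1,2)] by blast
    have "dist (guv q1) (guv p) < e" using d1(2)[of q1] q t by linarith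
    moreover have "dist (gvu q2) (gvu p) < e" using d2(2)[of q2] q t by linarith
    ultimately
    moreover have "\<bar>guv p - gvu p\<bar> \<le> \<bar>guv q1 - guv p\<bar> + \<bar>gvu q2 - gvu p\<bar>"
      using q(3) by (simp add: abs_if)
    ultimately show False unfolding dist_real_def e_def by (rule half_contra[rotated])
  qed
qed


lemma vd_inner:
  fixes F :: "real \<Rightarrow> 'a::real_inner"
  assumes "(F has_vector_derivative D) (at x)"
  shows "((\<lambda>t. F t \<bullet> a) has_real_derivative (D \<bullet> a)) (at x)"
  using inner_has[OF assms has_vector_derivative_const[of a]] by simp

lemma clairaut:
  fixes f :: "real \<times> real \<Rightarrow> 'a::real_inner"
  assumes U: "open U" "p \<in> U"
    and d: "\<And>q. q \<in> U \<Longrightarrow> f differentiable (at q)"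
    and du: "\<And>q. q \<in> U \<Longrightarrow> pu f differentiable (at q)"
    and dv: "\<And>q. q \<in> U \<Longrightarrow> pv f differentiable (at q)"
    and c1: "continuous_on U (pu (pv f))" and c2: "continuous_on U (pv (pu f))"
  shows "pu (pv f) p = pv (pu f) p"
proof -
  have "pv (pu f) p \<bullet> a = pu (pv f) p \<bullet> a" for a
  proof (rule clairaut_real[OF U, where g = "\<lambda>q. f q \<bullet> a" and gu = "\<lambda>q. pu f q \<bullet> a"
        and gv = "\<lambda>q. pv f q \<bullet> a"])
    fix q assume q: "q \<in> U"
    show "((\<lambda>t. f (t, snd q) \<bullet> a) has_real_derivative pu f q \<bullet> a) (at (fst q))"
      by (rule vd_inner[OF pu_has[OF d[OF q]]])
    show "((\<lambda>t. f (fst q, t) \<bullet> a) has_real_derivative pv f q \<bullet> a) (at (snd q))"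
      by (rule vd_inner[OF pv_has[OF d[OF q]]])
    show "((\<lambda>t. pu f (fst q, t) \<bullet> a) has_real_derivative pv (pu f) q \<bullet> a) (at (snd q))"
      by (rule vd_inner[OF pv_has[OF du[OF q]]])
    show "((\<lambda>t. pv f (t, snd q) \<bullet> a) has_real_derivative pu (pv f) q \<bullet> a) (at (fst q))"
      by (rule vd_inner[OF pu_has[OF dv[OF q]]])
  next
    show "isCont (\<lambda>q. pv (pu f) q \<bullet> a) p"
      using c2 U continuous_on_eq_continuous_at by (fastforce intro!: continuous_intros)
    show "isCont (\<lambda>q. pu (pv f) q \<bullet> a) p"
      using c1 U continuous_on_eq_continuous_at by (fastforce intro!: continuous_intros)
  qed
  from this[of "pv (pu f) p - pu (pv f) p"]
  have "(pv (pu f) p - pu (pv f) p) \<bullet> (pv (pu f) p - pu (pv f) p) = 0"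
    by (simp only: inner_diff_left)
  then show ?thesis by simp
qed

lemma smooth_facts:
  assumes "smooth_on f U" "q \<in> U"
  shows "f differentiable (at q)" "pu f differentiable (at q)" "pv f differentiable (at q)"
    "continuous_on U (pu (pv f))" "continuous_on U (pv (pu f))"
proof -
  have "Ck 2 f U" using assms(1) unfolding smooth_on_def by blast
  then show "f differentiable (at q)" "pu f differentiable (at q)" "pv f differentiable (at q)"
    "continuous_on U (pu (pv f))" "continuous_on U (pv (pu f))"
    using assms(2) by (simp_all add: numeral_2_eq_2)
qed

lemma smooth_clairaut:
  fixes f :: "real \<times> real \<Rightarrow> 'a::real_inner"
  assumes "smooth_on f U" "open U" "p \<in> U"
  shows "pu (pv f) p = pv (pu f) p"
  by (rule clairaut[OF assms(2,3)]) (use smooth_facts[OF assms(1)] assms(3) in auto)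


lemma pu_nproj:
  fixes A e1 e2 :: "real \<times> real \<Rightarrow> real^4"
  assumes "A differentiable (at p)" "e1 differentiable (at p)" "e2 differentiable (at p)"
  shows "pu (\<lambda>q. nproj e1 e2 q (A q)) p =
    (pu A p \<bullet> e1 p + A p \<bullet> pu e1 p) *\<^sub>R e1 p + (A p \<bullet> e1 p) *\<^sub>R pu e1 p +
    ((pu A p \<bullet> e2 p + A p \<bullet> pu e2 p) *\<^sub>R e2 p + (A p \<bullet> e2 p) *\<^sub>R pu e2 p)"
proof -
  note a = pu_has[OF assms(1)] and b = pu_has[OF assms(2)] and c = pu_has[OF assms(3)]
  have "((\<lambda>t. nproj e1 e2 (t, snd p) (A (t, snd p))) has_vector_derivative
    ((A p \<bullet> e1 p) *\<^sub>R pu e1 p + (pu A p \<bullet> e1 p + A p \<bullet> pu e1 p) *\<^sub>R e1 p) +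
    ((A p \<bullet> e2 p) *\<^sub>R pu e2 p + (pu A p \<bullet> e2 p + A p \<bullet> pu e2 p) *\<^sub>R e2 p)) (at (fst p))"
    unfolding nproj_def
    using has_vector_derivative_add[OF has_vector_derivative_scaleR[OF inner_has[OF a b] b]
        has_vector_derivative_scaleR[OF inner_has[OF a c] c]]
    by simp
  then show ?thesis unfolding pu_def[of "\<lambda>q. nproj e1 e2 q (A q)"]
    by (simp add: vector_derivative_at algebra_simps)
qed

lemma pv_nproj:
  fixes A e1 e2 :: "real \<times> real \<Rightarrow> real^4"
  assumes "A differentiable (at p)" "e1 differentiable (at p)" "e2 differentiable (at p)"
  shows "pv (\<lambda>q. nproj e1 e2 q (A q)) p =
    (pv A p \<bullet> e1 p + A p \<bullet> pv e1 p) *\<^sub>R e1 p + (A p \<bullet> e1 p) *\<^sub>R pv e1 p +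
    ((pv A p \<bullet> e2 p + A p \<bullet> pv e2 p) *\<^sub>R e2 p + (A p \<bullet> e2 p) *\<^sub>R pv e2 p)"
proof -
  note a = pv_has[OF assms(1)] and b = pv_has[OF assms(2)] and c = pv_has[OF assms(3)]
  have "((\<lambda>t. nproj e1 e2 (fst p, t) (A (fst p, t))) has_vector_derivative
    ((A p \<bullet> e1 p) *\<^sub>R pv e1 p + (pv A p \<bullet> e1 p + A p \<bullet> pv e1 p) *\<^sub>R e1 p) +
    ((A p \<bullet> e2 p) *\<^sub>R pv e2 p + (pv A p \<bullet> e2 p + A p \<bullet> pv e2 p) *\<^sub>R e2 p)) (at (snd p))"
    unfolding nproj_def
    using has_vector_derivative_add[OF has_vector_derivative_scaleR[OF inner_has[OF a b] b]
        has_vector_derivative_scaleR[OF inner_has[OF a c] c]]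
    by simp
  then show ?thesis unfolding pv_def[of "\<lambda>q. nproj e1 e2 q (A q)"]
    by (simp add: vector_derivative_at algebra_simps)
qed

lemma Rperp_formula:
  fixes e1 e2 :: "real \<times> real \<Rightarrow> real^4"
  assumes d: "e1 differentiable (at p)" "e2 differentiable (at p)"
     "pu e1 differentiable (at p)" "pv e1 differentiable (at p)"
    and on: "e1 p \<bullet> e1 p = 1" "e2 p \<bullet> e2 p = 1" "e1 p \<bullet> e2 p = 0"
    and sw: "pu (pv e1) p = pv (pu e1) p"
    and h: "pu e1 p \<bullet> e1 p = 0" "pv e1 p \<bullet> e1 p = 0" "pu e2 p \<bullet> e2 p = 0" "pv e2 p \<bullet> e2 p = 0"
      "pu e1 p \<bullet> e2 p + e1 p \<bullet> pu e2 p = 0" "pv e1 p \<bullet> e2 p + e1 p \<bullet> pv e2 p = 0"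
  shows "Rperp e1 e2 e1 p = (pv e1 p \<bullet> pu e2 p - pu e1 p \<bullet> pv e2 p) *\<^sub>R e2 p"
proof -
  have dv: "Dn_v e1 e2 e1 = (\<lambda>q. nproj e1 e2 q (pv e1 q))" by (rule ext) (simp add: Dn_v_def)
  have du: "Dn_u e1 e2 e1 = (\<lambda>q. nproj e1 e2 q (pu e1 q))" by (rule ext) (simp add: Dn_u_def)
  define w1 where "w1 = pu (\<lambda>q. nproj e1 e2 q (pv e1 q)) p"
  define w2 where "w2 = pv (\<lambda>q. nproj e1 e2 q (pu e1 q)) p"
  have R: "Rperp e1 e2 e1 p = ((w1 - w2) \<bullet> e1 p) *\<^sub>R e1 p + ((w1 - w2) \<bullet> e2 p) *\<^sub>R e2 p"
    unfolding Rperp_def Dn_u_def Dn_v_def dv du w1_def w2_def nproj_def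
    by (simp add: inner_diff_left algebra_simps)
  have w1: "w1 = (pu (pv e1) p \<bullet> e1 p + pv e1 p \<bullet> pu e1 p) *\<^sub>R e1 p + (pv e1 p \<bullet> e1 p) *\<^sub>R pu e1 p +
    ((pu (pv e1) p \<bullet> e2 p + pv e1 p \<bullet> pu e2 p) *\<^sub>R e2 p + (pv e1 p \<bullet> e2 p) *\<^sub>R pu e2 p)"
    unfolding w1_def by (rule pu_nproj[OF d(4,1,2)])
  have w2: "w2 = (pv (pu e1) p \<bullet> e1 p + pu e1 p \<bullet> pv e1 p) *\<^sub>R e1 p + (pu e1 p \<bullet> e1 p) *\<^sub>R pv e1 p +
    ((pv (pu e1) p \<bullet> e2 p + pu e1 p \<bullet> pv e2 p) *\<^sub>R e2 p + (pu e1 p \<bullet> e2 p) *\<^sub>R pv e2 p)"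
    unfolding w2_def by (rule pv_nproj[OF d(3,1,2)])
  have c1: "(w1 - w2) \<bullet> e1 p = 0"
  proof -
    have a: "e2 p \<bullet> e1 p = 0" using on by (simp add: inner_commute)
    have "(w1 - w2) \<bullet> e1 p = (pv e1 p \<bullet> e2 p) * (pu e2 p \<bullet> e1 p) - (pu e1 p \<bullet> e2 p) * (pv e2 p \<bullet> e1 p)"
      unfolding w1 w2 using on a h sw
      by (simp add: inner_diff_left inner_add_left inner_commute algebra_simps)
    also have "\<dots> = 0"
    proof -
      have x: "pu e2 p \<bullet> e1 p = - (pu e1 p \<bullet> e2 p)" using h(5) by (simp add: inner_commute eq_neg_iff_add_eq_0 add.commute)
      have y: "pv e2 p \<bullet> e1 p = - (pv e1 p \<bullet> e2 p)" using h(6) by (simp add: inner_commute eq_neg_iff_add_eq_0 add.commute)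
      show ?thesis by (simp add: x y)
    qed
    finally show ?thesis .
  qed
  have c2: "(w1 - w2) \<bullet> e2 p = pv e1 p \<bullet> pu e2 p - pu e1 p \<bullet> pv e2 p"
    unfolding w1 w2 using on h sw
    by (simp add: inner_diff_left inner_add_left inner_commute algebra_simps)
  show ?thesis using R c1 c2 by simp
qed


lemma vector4_nth:
  "(vector [a, b, c, d] :: 'a::zero^4) $ 1 = a"
  "(vector [a, b, c, d] :: 'a::zero^4) $ 2 = b"
  "(vector [a, b, c, d] :: 'a::zero^4) $ 3 = c"
  "(vector [a, b, c, d] :: 'a::zero^4) $ 4 = d"
  unfolding vector_def by simp_all

lemma det_kernel:
  fixes zu zv n1 n2 r :: "real^4"
  assumes "det (vector [zu, zv, n1, n2] :: real^4^4) \<noteq> 0"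
    and "zu \<bullet> r = 0" "zv \<bullet> r = 0" "n1 \<bullet> r = 0" "n2 \<bullet> r = 0"
  shows "r = 0"
proof -
  let ?A = "vector [zu, zv, n1, n2] :: real^4^4"
  have "?A *v r = 0"
    unfolding vec_eq_iff forall_4 using assms
    by (simp add: matrix_vector_mult_def vector4_nth inner_vec_def)
  moreover have "inj ((*v) ?A)"
    using det_nz_iff_inj[of "(*v) ?A"] assms(1) by (simp add: matrix_vector_mul_linear)
  ultimately show ?thesis by (metis inj_eq matrix_vector_mult_0_right)
qed

lemma decomp:
  fixes zu zv n1 n2 w w' :: "real^4"
  assumes on: "n1 \<bullet> n1 = 1" "n2 \<bullet> n2 = 1" "n1 \<bullet> n2 = 0" "n1 \<bullet> zu = 0" "n1 \<bullet> zv = 0"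
      "n2 \<bullet> zu = 0" "n2 \<bullet> zv = 0"
    and D: "zu \<bullet> zu * (zv \<bullet> zv) - (zu \<bullet> zv)\<^sup>2 > 0"
    and det: "det (vector [zu, zv, n1, n2] :: real^4^4) \<noteq> 0"
  shows "w \<bullet> w' = ((w \<bullet> zu) * (w' \<bullet> zu) * (zv \<bullet> zv) - ((w \<bullet> zu) * (w' \<bullet> zv) + (w \<bullet> zv) * (w' \<bullet> zu)) * (zu \<bullet> zv)
     + (w \<bullet> zv) * (w' \<bullet> zv) * (zu \<bullet> zu)) / (zu \<bullet> zu * (zv \<bullet> zv) - (zu \<bullet> zv)\<^sup>2)
     + (w \<bullet> n1) * (w' \<bullet> n1) + (w \<bullet> n2) * (w' \<bullet> n2)"
proof -
  define E where "E = zu \<bullet> zu"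
  define F where "F = zu \<bullet> zv"
  define G where "G = zv \<bullet> zv"
  define Dt where "Dt = E * G - F\<^sup>2"
  have Dt: "Dt > 0" using D by (simp add: Dt_def E_def F_def G_def)
  define a where "a = ((w \<bullet> zu) * G - (w \<bullet> zv) * F) / Dt"
  define b where "b = ((w \<bullet> zv) * E - (w \<bullet> zu) * F) / Dt"
  define r where "r = w - a *\<^sub>R zu - b *\<^sub>R zv - (w \<bullet> n1) *\<^sub>R n1 - (w \<bullet> n2) *\<^sub>R n2"
  have fu: "zv \<bullet> zu = F" by (simp add: F_def inner_commute)
  have o2: "n1 \<bullet> zu = 0" "n1 \<bullet> zv = 0" "n2 \<bullet> zu = 0" "n2 \<bullet> zv = 0" "n2 \<bullet> n1 = 0"
     "zu \<bullet> n1 = 0" "zv \<bullet> n1 = 0" "zu \<bullet> n2 = 0" "zv \<bullet> n2 = 0"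
    using on by (simp_all add: inner_commute)
  have r1: "zu \<bullet> r = 0"
  proof -
    have "zu \<bullet> r = w \<bullet> zu - a * E - b * F"
      unfolding r_def using o2 by (simp add: inner_diff_right E_def F_def inner_commute)
    also have "\<dots> = 0" using Dt unfolding a_def b_def Dt_def by (simp add: field_simps power2_eq_square)
    finally show ?thesis .
  qed
  have r2: "zv \<bullet> r = 0"
  proof -
    have "zv \<bullet> r = w \<bullet> zv - a * F - b * G"
      unfolding r_def using o2 by (simp add: inner_diff_right G_def F_def inner_commute)
    also have "\<dots> = 0" using Dt unfolding a_def b_def Dt_def by (simp add: field_simps power2_eq_square)
    finally show ?thesis .
  qed
  have r3: "n1 \<bullet> r = 0" unfolding r_def using o2 on by (simp add: inner_diff_right inner_commute)
  have r4: "n2 \<bullet> r = 0" unfolding r_def using o2 on by (simp add: inner_diff_right inner_commute)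
  have "r = 0" using det_kernel[OF det r1 r2 r3 r4] .
  then have wd: "w = a *\<^sub>R zu + b *\<^sub>R zv + (w \<bullet> n1) *\<^sub>R n1 + (w \<bullet> n2) *\<^sub>R n2"
    unfolding r_def by (simp add: algebra_simps)
  have "w \<bullet> w' = a * (zu \<bullet> w') + b * (zv \<bullet> w') + (w \<bullet> n1) * (n1 \<bullet> w') + (w \<bullet> n2) * (n2 \<bullet> w')"
    using arg_cong[OF wd, of "\<lambda>x. x \<bullet> w'"] by (simp only: inner_add_left inner_scaleR_left)
  also have "a * (zu \<bullet> w') + b * (zv \<bullet> w') = ((w \<bullet> zu) * (w' \<bullet> zu) * G - ((w \<bullet> zu) * (w' \<bullet> zv) + (w \<bullet> zv) * (w' \<bullet> zu)) * F
     + (w \<bullet> zv) * (w' \<bullet> zv) * E) / Dt"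
    using Dt unfolding a_def b_def by (simp add: field_simps inner_commute)
  finally show ?thesis unfolding Dt_def E_def F_def G_def by (simp add: inner_commute)
qed


lemma gram_pos:
  fixes zu zv :: "real^4"
  assumes "\<forall>a b. a *\<^sub>R zu + b *\<^sub>R zv = 0 \<longrightarrow> a = 0 \<and> b = 0"
  shows "zu \<bullet> zu * (zv \<bullet> zv) - (zu \<bullet> zv)\<^sup>2 > 0" "zu \<bullet> zu > 0"
proof -
  have zv: "zv \<noteq> 0" using assms[rule_format, of 0 1] by auto
  have zu: "zu \<noteq> 0" using assms[rule_format, of 1 0] by auto
  then show "zu \<bullet> zu > 0" by simp
  define G where "G = zv \<bullet> zv"
  have G: "G > 0" using zv by (simp add: G_def)
  define y where "y = G *\<^sub>R zu + (- (zu \<bullet> zv)) *\<^sub>R zv"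
  have "y \<noteq> 0" using assms[rule_format, of G "- (zu \<bullet> zv)"] G by (auto simp: y_def)
  then have "y \<bullet> y > 0" by simp
  moreover have "y \<bullet> y = G * (zu \<bullet> zu * (zv \<bullet> zv) - (zu \<bullet> zv)\<^sup>2)"
    unfolding y_def G_def by (simp add: inner_add_left inner_add_right inner_commute algebra_simps power2_eq_square)
  ultimately show "zu \<bullet> zu * (zv \<bullet> zv) - (zu \<bullet> zv)\<^sup>2 > 0" using G
    by (simp add: zero_less_mult_iff)
qed

lemma X_alg:
  fixes E F G a11 a12 a22 b11 b12 b22 X :: real
  assumes D: "E * G - F\<^sup>2 > 0"
    and X: "X = ((-a12)*(-b11)*G - ((-a12)*(-b12) + (-a22)*(-b11))*F + (-a22)*(-b12)*E) / (E*G-F\<^sup>2)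
             - ((-a11)*(-b12)*G - ((-a11)*(-b22) + (-a12)*(-b12))*F + (-a12)*(-b22)*E) / (E*G-F\<^sup>2)"
  shows "X = 0 \<longleftrightarrow> E * (2 / sqrt (E*G-F\<^sup>2) * (a12*b22 - a22*b12))
      + G * (2 / sqrt (E*G-F\<^sup>2) * (a11*b12 - a12*b11))
      - 2 * F * (1 / sqrt (E*G-F\<^sup>2) * (a11*b22 - a22*b11)) = 0"
proof -
  define W where "W = sqrt (E*G-F\<^sup>2)"
  have W: "W > 0" using D by (simp add: W_def)
  define nu where "nu = G*(a12*b11 - a11*b12) + F*(a11*b22 - a22*b11) + E*(a22*b12 - a12*b22)"
  have "X = nu / (E*G-F\<^sup>2)"
    unfolding X diff_divide_distrib[symmetric] nu_def by (simp add: algebra_simps)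
  then have 1: "X = 0 \<longleftrightarrow> nu = 0" using D by simp
  have 2: "E * (2 / W * (a12*b22 - a22*b12)) + G * (2 / W * (a11*b12 - a12*b11))
      - 2 * F * (1 / W * (a11*b22 - a22*b11)) = - (2 / W) * nu"
    unfolding nu_def by (simp add: algebra_simps)
  have "X = 0 \<longleftrightarrow> (E * (2 / W * (a12*b22 - a22*b12)) + G * (2 / W * (a11*b12 - a12*b11))
      - 2 * F * (1 / W * (a11*b22 - a22*b11))) = 0"
    unfolding 1 2 using W by simp
  then show ?thesis unfolding W_def .
qed

lemma quad_alg:
  fixes E F G L M N :: real
  assumes D: "E * G - F\<^sup>2 > 0" and E: "E > 0" and nf: "\<not> (L = 0 \<and> M = 0 \<and> N = 0)"
  shows "E * N + G * L - 2 * F * M = 0 \<longleftrightarrow>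
    (\<exists>nu1 nu2. (\<forall>x::real. (E * G - F\<^sup>2) * x\<^sup>2 - (E * N + G * L - 2 * F * M) * x + (L * N - M\<^sup>2)
       = (E * G - F\<^sup>2) * (x - nu1) * (x - nu2)) \<and> nu2 = - nu1 \<and> nu1 \<noteq> 0)"
proof
  assume T: "E * N + G * L - 2 * F * M = 0"
  have EN: "E * N = 2 * F * M - G * L" using T by simp
  have q: "E * (L * N - M\<^sup>2) = - (G * L\<^sup>2 - 2 * F * L * M + E * M\<^sup>2)"
  proof -
    have "E * (L * N - M\<^sup>2) = L * (E * N) - E * M\<^sup>2" by (simp add: algebra_simps)
    also have "\<dots> = - (G * L\<^sup>2 - 2 * F * L * M + E * M\<^sup>2)" unfolding EN by (simp add: algebra_simps power2_eq_square)
    finally show ?thesis .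
  qed
  have qq: "E * (G * L\<^sup>2 - 2 * F * L * M + E * M\<^sup>2) = (E * M - F * L)\<^sup>2 + (E * G - F\<^sup>2) * L\<^sup>2"
    by (simp add: algebra_simps power2_eq_square)
  have "G * L\<^sup>2 - 2 * F * L * M + E * M\<^sup>2 > 0"
  proof (cases "L = 0")
    case True
    then have "M \<noteq> 0"
    proof (intro notI)
      assume "M = 0" then have "E * N = 0" using EN True by simp
      then have "N = 0" using E by simp
      then show False using nf True \<open>M = 0\<close> by simp
    qed
    then show ?thesis using True E by simp
  next
    case False
    then have "(E * M - F * L)\<^sup>2 + (E * G - F\<^sup>2) * L\<^sup>2 > 0"
      using D by (simp add: add_nonneg_pos)
    then show ?thesis using qq E by (metis zero_less_mult_pos)
  qed
  then have "E * (L * N - M\<^sup>2) < 0" using q by linarith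
  then have C: "L * N - M\<^sup>2 < 0" using E by (simp add: mult_less_0_iff)
  define nu where "nu = sqrt (- (L * N - M\<^sup>2) / (E * G - F\<^sup>2))"
  have nu2: "nu\<^sup>2 = - (L * N - M\<^sup>2) / (E * G - F\<^sup>2)" unfolding nu_def using C D by simp
  have "nu \<noteq> 0" unfolding nu_def using C D by simp
  moreover have "\<forall>x::real. (E * G - F\<^sup>2) * x\<^sup>2 - (E * N + G * L - 2 * F * M) * x + (L * N - M\<^sup>2)
       = (E * G - F\<^sup>2) * (x - nu) * (x - - nu)"
  proof
    fix x :: real
    have "(E * G - F\<^sup>2) * (x - nu) * (x - - nu) = (E * G - F\<^sup>2) * x\<^sup>2 - (E * G - F\<^sup>2) * nu\<^sup>2"
      by (simp add: algebra_simps power2_eq_square)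
    also have "(E * G - F\<^sup>2) * nu\<^sup>2 = - (L * N - M\<^sup>2)" unfolding nu2 using D by simp
    finally show "(E * G - F\<^sup>2) * x\<^sup>2 - (E * N + G * L - 2 * F * M) * x + (L * N - M\<^sup>2)
       = (E * G - F\<^sup>2) * (x - nu) * (x - - nu)" using T by simp
  qed
  ultimately show "\<exists>nu1 nu2. (\<forall>x::real. (E * G - F\<^sup>2) * x\<^sup>2 - (E * N + G * L - 2 * F * M) * x + (L * N - M\<^sup>2)
       = (E * G - F\<^sup>2) * (x - nu1) * (x - nu2)) \<and> nu2 = - nu1 \<and> nu1 \<noteq> 0" by blast
next
  assume "\<exists>nu1 nu2. (\<forall>x::real. (E * G - F\<^sup>2) * x\<^sup>2 - (E * N + G * L - 2 * F * M) * x + (L * N - M\<^sup>2)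
       = (E * G - F\<^sup>2) * (x - nu1) * (x - nu2)) \<and> nu2 = - nu1 \<and> nu1 \<noteq> 0"
  then obtain nu where h: "\<forall>x::real. (E * G - F\<^sup>2) * x\<^sup>2 - (E * N + G * L - 2 * F * M) * x + (L * N - M\<^sup>2)
       = (E * G - F\<^sup>2) * (x - nu) * (x - - nu)" by blast
  have "(E * G - F\<^sup>2) * 1\<^sup>2 - (E * N + G * L - 2 * F * M) * 1 + (L * N - M\<^sup>2)
       = (E * G - F\<^sup>2) * (1 - nu) * (1 - - nu)" using h by blast
  moreover have "(E * G - F\<^sup>2) * (-1)\<^sup>2 - (E * N + G * L - 2 * F * M) * (-1) + (L * N - M\<^sup>2)
       = (E * G - F\<^sup>2) * (-1 - nu) * (-1 - - nu)" using h by blast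
  ultimately show "E * N + G * L - 2 * F * M = 0" by (simp add: algebra_simps)
qed


lemma nproj_swap: "nproj e1 e2 = nproj e2 e1"
  by (intro ext) (simp add: nproj_def add.commute)

lemma Rperp_swap: "Rperp e1 e2 xi p = Rperp e2 e1 xi p"
proof -
  have u: "Dn_u e1 e2 = Dn_u e2 e1" by (intro ext) (simp add: Dn_u_def nproj_swap)
  have v: "Dn_v e1 e2 = Dn_v e2 e1" by (intro ext) (simp add: Dn_v_def nproj_swap)
  show ?thesis unfolding Rperp_def u v ..
qed

lemma pointwise:
  assumes reg: "regular_surface z U" and nf: "normal_frame z U e1 e2" and p: "p \<in> U"
  shows "Rperp e1 e2 e1 p = (pv e1 p \<bullet> pu e2 p - pu e1 p \<bullet> pv e2 p) *\<^sub>R e2 p"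
    and "Rperp e1 e2 e2 p = (- (pv e1 p \<bullet> pu e2 p - pu e1 p \<bullet> pv e2 p)) *\<^sub>R e1 p"
    and "(pv e1 p \<bullet> pu e2 p - pu e1 p \<bullet> pv e2 p = 0) \<longleftrightarrow>
         EE z p * NN z e1 e2 p + GG z p * LL z e1 e2 p - 2 * FF z p * MM z e1 e2 p = 0"
    and "EE z p * GG z p - (FF z p)\<^sup>2 > 0" and "EE z p > 0"
proof -
  have U: "open U" and sz: "smooth_on z U"
    and ind: "\<forall>a b. a *\<^sub>R pu z p + b *\<^sub>R pv z p = 0 \<longrightarrow> a = 0 \<and> b = 0"
    using reg p unfolding regular_surface_def by auto
  have s1: "smooth_on e1 U" and s2: "smooth_on e2 U" and fr: "\<forall>q\<in>U. e1 q \<bullet> e1 q = 1 \<and> e2 q \<bullet> e2 q = 1 \<and> e1 q \<bullet> e2 q = 0 \<and>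
            e1 q \<bullet> pu z q = 0 \<and> e1 q \<bullet> pv z q = 0 \<and>
            e2 q \<bullet> pu z q = 0 \<and> e2 q \<bullet> pv z q = 0 \<and>
            det (vector [pu z q, pv z q, e1 q, e2 q] :: real^4^4) > 0"
    using nf unfolding normal_frame_def by auto
  note dz = smooth_facts[OF sz p] and d1 = smooth_facts[OF s1 p] and d2 = smooth_facts[OF s2 p]
  have on: "e1 p \<bullet> e1 p = 1" "e2 p \<bullet> e2 p = 1" "e1 p \<bullet> e2 p = 0"
      "e1 p \<bullet> pu z p = 0" "e1 p \<bullet> pv z p = 0" "e2 p \<bullet> pu z p = 0" "e2 p \<bullet> pv z p = 0"
    and det: "det (vector [pu z p, pv z p, e1 p, e2 p] :: real^4^4) \<noteq> 0"
    using fr p by auto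
  have swz: "pu (pv z) p = pv (pu z) p" by (rule smooth_clairaut[OF sz U p])
  have sw1: "pu (pv e1) p = pv (pu e1) p" by (rule smooth_clairaut[OF s1 U p])
  have sw2: "pu (pv e2) p = pv (pu e2) p" by (rule smooth_clairaut[OF s2 U p])
  have k1: "\<forall>q\<in>U. e1 q \<bullet> e1 q = 1" "\<forall>q\<in>U. e2 q \<bullet> e2 q = 1" "\<forall>q\<in>U. e1 q \<bullet> e2 q = 0"
     "\<forall>q\<in>U. e1 q \<bullet> pu z q = 0" "\<forall>q\<in>U. e1 q \<bullet> pv z q = 0"
     "\<forall>q\<in>U. e2 q \<bullet> pu z q = 0" "\<forall>q\<in>U. e2 q \<bullet> pv z q = 0" using fr by auto
  have h: "pu e1 p \<bullet> e1 p = 0" "pv e1 p \<bullet> e1 p = 0" "pu e2 p \<bullet> e2 p = 0" "pv e2 p \<bullet> e2 p = 0"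
    using inner_const_u[OF U p k1(1) d1(1) d1(1)] inner_const_v[OF U p k1(1) d1(1) d1(1)]
      inner_const_u[OF U p k1(2) d2(1) d2(1)] inner_const_v[OF U p k1(2) d2(1) d2(1)]
    by (simp_all add: inner_commute)
  have h12: "pu e1 p \<bullet> e2 p + e1 p \<bullet> pu e2 p = 0" "pv e1 p \<bullet> e2 p + e1 p \<bullet> pv e2 p = 0"
    using inner_const_u[OF U p k1(3) d1(1) d2(1)] inner_const_v[OF U p k1(3) d1(1) d2(1)] by simp_all
  have h21: "pu e2 p \<bullet> e1 p + e2 p \<bullet> pu e1 p = 0" "pv e2 p \<bullet> e1 p + e2 p \<bullet> pv e1 p = 0"
    using h12 by (simp_all add: inner_commute add.commute)
  show R1: "Rperp e1 e2 e1 p = (pv e1 p \<bullet> pu e2 p - pu e1 p \<bullet> pv e2 p) *\<^sub>R e2 p"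
    by (rule Rperp_formula[OF d1(1) d2(1) d1(2) d1(3) on(1-3) sw1 h h12])
  have "Rperp e2 e1 e2 p = (pv e2 p \<bullet> pu e1 p - pu e2 p \<bullet> pv e1 p) *\<^sub>R e1 p"
    by (rule Rperp_formula[OF d2(1) d1(1) d2(2) d2(3) on(2,1) _ sw2 h(3,4,1,2) h21])
      (simp add: on inner_commute)
  then show "Rperp e1 e2 e2 p = (- (pv e1 p \<bullet> pu e2 p - pu e1 p \<bullet> pv e2 p)) *\<^sub>R e1 p"
    by (simp add: Rperp_swap[of e1 e2] inner_commute)
  note gp = gram_pos[OF ind]
  show "EE z p * GG z p - (FF z p)\<^sup>2 > 0" "EE z p > 0" using gp by (simp_all add: EE_def FF_def GG_def)
  have np1: "nproj e1 e2 p w \<bullet> e1 p = w \<bullet> e1 p" and np2: "nproj e1 e2 p w \<bullet> e2 p = w \<bullet> e2 p" for w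
    using on by (simp_all add: nproj_def inner_add_left inner_add_right inner_commute)
  define a11 where "a11 = c11_1 z e1 e2 p"
  define a12 where "a12 = c12_1 z e1 e2 p"
  define a22 where "a22 = c22_1 z e1 e2 p"
  define b11 where "b11 = c11_2 z e1 e2 p"
  define b12 where "b12 = c12_2 z e1 e2 p"
  define b22 where "b22 = c22_2 z e1 e2 p"
  have ca: "a11 = pu (pu z) p \<bullet> e1 p" "a12 = pv (pu z) p \<bullet> e1 p" "a22 = pv (pv z) p \<bullet> e1 p"
    "b11 = pu (pu z) p \<bullet> e2 p" "b12 = pv (pu z) p \<bullet> e2 p" "b22 = pv (pv z) p \<bullet> e2 p"
    unfolding a11_def a12_def a22_def b11_def b12_def b22_def c11_1_def c12_1_def c22_1_def
      c11_2_def c12_2_def c22_2_def sigma_uu_def sigma_uv_def sigma_vv_def np1 np2 by simp_all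
  have f1: "pu e1 p \<bullet> pu z p = - a11" "pv e1 p \<bullet> pu z p = - a12"
     "pu e1 p \<bullet> pv z p = - a12" "pv e1 p \<bullet> pv z p = - a22"
    using inner_const_u[OF U p k1(4) d1(1) dz(2)] inner_const_v[OF U p k1(4) d1(1) dz(2)]
      inner_const_u[OF U p k1(5) d1(1) dz(3)] inner_const_v[OF U p k1(5) d1(1) dz(3)]
    unfolding ca swz by (simp_all add: inner_commute eq_neg_iff_add_eq_0)
  have f2: "pu e2 p \<bullet> pu z p = - b11" "pv e2 p \<bullet> pu z p = - b12"
     "pu e2 p \<bullet> pv z p = - b12" "pv e2 p \<bullet> pv z p = - b22"
    using inner_const_u[OF U p k1(6) d2(1) dz(2)] inner_const_v[OF U p k1(6) d2(1) dz(2)]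
      inner_const_u[OF U p k1(7) d2(1) dz(3)] inner_const_v[OF U p k1(7) d2(1) dz(3)]
    unfolding ca swz by (simp_all add: inner_commute eq_neg_iff_add_eq_0)
  note dc = decomp[OF on(1,2,3) on(4,5,6,7) gp(1) det]
  have "pv e1 p \<bullet> pu e2 p - pu e1 p \<bullet> pv e2 p =
     ((-a12)*(-b11)*GG z p - ((-a12)*(-b12) + (-a22)*(-b11))*FF z p + (-a22)*(-b12)*EE z p) / (EE z p*GG z p-(FF z p)\<^sup>2)
     - ((-a11)*(-b12)*GG z p - ((-a11)*(-b22) + (-a12)*(-b12))*FF z p + (-a12)*(-b22)*EE z p) / (EE z p*GG z p-(FF z p)\<^sup>2)"
    unfolding dc[of "pv e1 p" "pu e2 p"] dc[of "pu e1 p" "pv e2 p"] f1 f2 EE_def FF_def GG_def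
    using h h12 by (simp add: inner_commute)
  from X_alg[OF gp(1)[folded EE_def FF_def GG_def] this]
  show "(pv e1 p \<bullet> pu e2 p - pu e1 p \<bullet> pv e2 p = 0) \<longleftrightarrow>
         EE z p * NN z e1 e2 p + GG z p * LL z e1 e2 p - 2 * FF z p * MM z e1 e2 p = 0"
    unfolding NN_def LL_def MM_def WW_def a11_def a12_def a22_def b11_def b12_def b22_def by simp
qed


theorem proposition3p4:
  fixes z e1 e2 :: "real \<times> real \<Rightarrow> real^4" and U :: "(real \<times> real) set"
  assumes "regular_surface z U"
    and "normal_frame z U e1 e2"
    and "\<forall>p\<in>U. \<not> flat_point z e1 e2 p"
  shows "flat_normal_connection U e1 e2 \<longleftrightarrow>
    (\<forall>p\<in>U. \<exists>nu1 nu2. principal_normal_curvatures z e1 e2 p nu1 nu2 \<and> nu2 = - nu1 \<and> nu1 \<noteq> 0)"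
proof -
  have pt: "(Rperp e1 e2 e1 p = 0 \<and> Rperp e1 e2 e2 p = 0) \<longleftrightarrow>
      (\<exists>nu1 nu2. principal_normal_curvatures z e1 e2 p nu1 nu2 \<and> nu2 = - nu1 \<and> nu1 \<noteq> 0)"
    if p: "p \<in> U" for p
  proof -
    note P = pointwise[OF assms(1,2) p]
    have n1: "e1 p \<noteq> 0" "e2 p \<noteq> 0" using assms(2) p unfolding normal_frame_def by auto
    have "(Rperp e1 e2 e1 p = 0 \<and> Rperp e1 e2 e2 p = 0) \<longleftrightarrow>
        (pv e1 p \<bullet> pu e2 p - pu e1 p \<bullet> pv e2 p = 0)"
      unfolding P(1,2) using n1 by auto
    also have "\<dots> \<longleftrightarrow> EE z p * NN z e1 e2 p + GG z p * LL z e1 e2 p - 2 * FF z p * MM z e1 e2 p = 0"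
      by (rule P(3))
    also have "\<dots> \<longleftrightarrow> (\<exists>nu1 nu2. principal_normal_curvatures z e1 e2 p nu1 nu2 \<and> nu2 = - nu1 \<and> nu1 \<noteq> 0)"
      unfolding principal_normal_curvatures_def
      by (rule quad_alg[OF P(4,5)]) (use assms(3) p in \<open>auto simp: flat_point_def\<close>)
    finally show ?thesis .
  qed
  show ?thesis unfolding flat_normal_connection_def using pt by blast
qed

end
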